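(* Let $\ell\ge2$, let $\mathbf{a}=(a_1,\ldots,a_\ell)\in\mathbf{Z}^\ell$ with $\sum a_j=0$, and let $\lambda=\pi_\ell(\mathbf{a})$. Let $i$ be the largest index with $a_i=\max\{a_1,\ldots,a_\ell\}$. Then \[ \lambda_1=(a_i-1)\ell+i \] and also \[ \lambda_1=\sum_{j=1}^{i-1}(a_i-a_j)+\sum_{j=i+1}^{\ell}(a_i-a_j-1). \]
   Context: For $\mathbf{a}\in\mathbf{Z}^\ell$ with $\sum a_j=0$, let $X(\mathbf{a})=\{r\ell+(j-1):1\le j\le\ell,\ r\in\mathbf{Z},\ r\le a_j\}$ and let $\pi_\ell(\mathbf{a})$ be the partition whose nonzero parts (in weakly decreasing order) are the positive values among $\#\{y\in\mathbf{Z}\setminus X(\mathbf{a}):y<x\}$, $x\in X(\mathbf{a})$. ($\pi_\ell$ is a bijection onto the set of $\ell$-cores, i.e. partitions none of whose hook lengths is divisible by $\ell$.) $\lambda_1$ denotes the first (largest) part, taken to be $0$ for the empty partition. *)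

theory Defs
  imports Main
begin

text \<open>A vector a in Z^l is represented as a function a :: nat => int, of which only
  the values a 1, ..., a l matter.\<close>

definition Xset :: "nat \<Rightarrow> (nat \<Rightarrow> int) \<Rightarrow> int set" where
  "Xset l a = {r * int l + (int j - 1) | j r. 1 \<le> j \<and> j \<le> l \<and> r \<le> a j}"

definition gapcount :: "nat \<Rightarrow> (nat \<Rightarrow> int) \<Rightarrow> int \<Rightarrow> nat" where
  "gapcount l a x = card {y :: int. y \<notin> Xset l a \<and> y < x}"

definition pi_ell :: "nat \<Rightarrow> (nat \<Rightarrow> int) \<Rightarrow> nat list" where
  "pi_ell l a = rev (sort (map (gapcount l a)
      (sorted_list_of_set {x \<in> Xset l a. 0 < gapcount l a x})))"

definition first_part :: "nat list \<Rightarrow> nat" where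
  "first_part p = (case p of [] \<Rightarrow> 0 | q # _ \<Rightarrow> q)"

end

theory Submission imports Defs begin
lemma decomp: assumes "0<l" "1\<le>j" "j\<le>l"
  shows "(r*int l + (int j - 1)) div int l = r \<and> (r*int l + (int j - 1)) mod int l = int j - 1"
  using assms by (simp add: div_add1_eq mod_pos_pos_trivial div_pos_pos_trivial)
lemma memX: assumes "0<l" shows "y \<in> Xset l a \<longleftrightarrow> y div int l \<le> a (nat (y mod int l) + 1)"
proof
  assume "y \<in> Xset l a"
  then obtain j r where "y = r * int l + (int j - 1)" "1 \<le> j" "j \<le> l" "r \<le> a j" unfolding Xset_def by auto
  moreover have "nat (int j - 1) + 1 = j" using \<open>1 \<le> j\<close> by simp
  ultimately show "y div int l \<le> a (nat (y mod int l) + 1)" using decomp[OF assms, of j r] by auto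
next
  assume h: "y div int l \<le> a (nat (y mod int l) + 1)"
  have m: "0 \<le> y mod int l" "y mod int l < int l" using assms by auto
  have "y = (y div int l) * int l + (int (nat (y mod int l) + 1) - 1)" using m by simp
  moreover have "1 \<le> nat (y mod int l) + 1" "nat (y mod int l) + 1 \<le> l" using m by auto
  ultimately show "y \<in> Xset l a" unfolding Xset_def using h by blast
qed
lemma lt_iff: fixes r a L d :: int assumes "0<d" "d\<le>L" shows "r*L < a*L + d \<longleftrightarrow> r \<le> a"
proof
  assume h: "r*L < a*L + d" show "r \<le> a"
  proof (rule ccontr)
    assume "\<not> r \<le> a" hence "a+1 \<le> r" by simp
    hence "(a+1)*L \<le> r*L" using assms by (intro mult_right_mono) auto
    thus False using h assms by (simp add: algebra_simps)
  qed
next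
  assume "r \<le> a" hence "r*L \<le> a*L" using assms by (intro mult_right_mono) auto
  thus "r*L < a*L + d" using assms by linarith
qed
lemma last_sort: "xs \<noteq> [] \<Longrightarrow> hd (rev (sort xs)) = Max (set xs)"
proof -
  assume "xs \<noteq> []"
  then have ne: "sort xs \<noteq> []" by (metis length_0_conv length_sort)
  have "hd (rev (sort xs)) = last (sort xs)" using ne by (simp add: hd_rev)
  moreover have "last (sort xs) \<in> set xs" using ne last_in_set by (metis set_sort)
  moreover have "\<forall>x\<in>set xs. x \<le> last (sort xs)"
  proof
    fix x assume "x \<in> set xs"
    then obtain k where k: "k < length (sort xs)" "sort xs ! k = x" by (metis in_set_conv_nth set_sort)
    have "last (sort xs) = sort xs ! (length (sort xs) - 1)" using ne by (simp add: last_conv_nth)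
    moreover have "sort xs ! k \<le> sort xs ! (length (sort xs) - 1)"
      using sorted_nth_mono[OF sorted_sort, of k "length (sort xs) - 1" xs] k by auto
    ultimately show "x \<le> last (sort xs)" using k by simp
  qed
  ultimately show ?thesis by (metis Max_eqI finite_set)
qed
lemma split3: fixes h :: "nat \<Rightarrow> int" assumes "1\<le>i" "i\<le>l"
  shows "sum h {1..l} = sum h {1..i-1} + h i + sum h {i+1..l}"
proof -
  have "{1..l} = ({1..i-1} \<union> {i}) \<union> {i+1..l}" using assms by auto
  moreover have "sum h (({1..i-1} \<union> {i}) \<union> {i+1..l}) = sum h ({1..i-1} \<union> {i}) + sum h {i+1..l}"
    by (rule sum.union_disjoint) auto
  moreover have "sum h ({1..i-1} \<union> {i}) = sum h {1..i-1} + h i"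
    using assms by (subst sum.union_disjoint) auto
  ultimately show ?thesis by simp
qed

theorem mainTheorem7:
  fixes l i :: nat and a :: "nat \<Rightarrow> int"
  assumes "l \<ge> 2"
    and "(\<Sum>j = 1..l. a j) = 0"
    and "1 \<le> i" and "i \<le> l"
    and "a i = Max (a ` {1..l})"
    and "\<forall>j. i < j \<and> j \<le> l \<longrightarrow> a j < a i"
  shows "int (first_part (pi_ell l a)) = (a i - 1) * int l + int i
       \<and> int (first_part (pi_ell l a)) =
           (\<Sum>j = 1..i-1. a i - a j) + (\<Sum>j = i+1..l. a i - a j - 1)"
proof -
  have l0: "0 < l" using assms(1) by simp
  define L where "L = int l"
  have L0: "0 < L" using l0 L_def by simp
  define X where "X = Xset l a"
  define g where "g = gapcount l a"
  define M where "M = a i * L + (int i - 1)"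
  define m where "m = Min (a ` {1..l})"
  have amax: "\<And>j. j \<in> {1..l} \<Longrightarrow> a j \<le> a i" using assms(5) by simp
  have amin: "\<And>j. j \<in> {1..l} \<Longrightarrow> m \<le> a j" unfolding m_def by simp
  have mem: "\<And>y. y \<in> X \<longleftrightarrow> y div L \<le> a (nat (y mod L) + 1)"
    unfolding X_def L_def using memX[OF l0] by blast
  have jr: "\<And>y. 1 \<le> nat (y mod L) + 1 \<and> nat (y mod L) + 1 \<le> l \<and> y = (y div L) * L + (int (nat (y mod L) + 1) - 1)"
  proof -
    fix y
    have "0 \<le> y mod L" "y mod L < L" using L0 by auto
    thus "1 \<le> nat (y mod L) + 1 \<and> nat (y mod L) + 1 \<le> l \<and> y = (y div L) * L + (int (nat (y mod L) + 1) - 1)"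
      unfolding L_def by auto
  qed
  have dec: "\<And>j r. 1 \<le> j \<Longrightarrow> j \<le> l \<Longrightarrow> (r*L + (int j - 1)) div L = r \<and> (r*L + (int j - 1)) mod L = int j - 1"
    unfolding L_def using decomp[OF l0] by blast
  have memj: "\<And>j r. 1 \<le> j \<Longrightarrow> j \<le> l \<Longrightarrow> r*L + (int j - 1) \<in> X \<longleftrightarrow> r \<le> a j"
  proof -
    fix j r assume j: "1 \<le> j" "j \<le> l"
    have "nat (int j - 1) + 1 = j" using j by simp
    thus "r*L + (int j - 1) \<in> X \<longleftrightarrow> r \<le> a j" using mem dec[OF j, of r] by simp
  qed
  have F1: "\<And>x. x \<in> X \<Longrightarrow> x \<le> M"
  proof -
    fix x assume "x \<in> X"
    then obtain j r where x: "x = r*L + (int j - 1)" "1 \<le> j" "j \<le> l" "r \<le> a j"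
      unfolding X_def Xset_def L_def by auto
    show "x \<le> M"
    proof (cases "a j < a i")
      case True
      hence "r \<le> a i - 1" using x by simp
      hence "r*L \<le> (a i - 1)*L" using L0 by (intro mult_right_mono) auto
      moreover have "int j - 1 < L" using x L_def by simp
      moreover have "(a i - 1)*L = a i * L - L" by (simp add: algebra_simps)
      ultimately show ?thesis unfolding M_def using x \<open>1 \<le> i\<close> by linarith
    next
      case False
      hence "a j = a i" using amax x by force
      hence "j \<le> i" using assms(6) x by (metis less_irrefl not_le_imp_less)
      have "r*L \<le> a i*L" using L0 x \<open>a j = a i\<close> by (intro mult_right_mono) auto
      thus ?thesis unfolding M_def using x \<open>j \<le> i\<close> by simp
    qed
  qed
  have F2: "M \<in> X" unfolding M_def using memj[OF assms(3,4)] by simp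
  have F3: "\<And>y. y < m*L \<Longrightarrow> y \<in> X"
  proof -
    fix y assume y: "y < m*L"
    have "y div L * L = y - y mod L" by (simp add: minus_mod_eq_div_mult)
    moreover have "0 \<le> y mod L" using L0 by simp
    ultimately have "y div L * L < m * L" using y by linarith
    hence "y div L < m" using L0 by (simp add: mult_less_cancel_right)
    moreover have "m \<le> a (nat (y mod L) + 1)" using amin jr[of y] by auto
    ultimately show "y \<in> X" using mem by simp
  qed
  have gdef: "\<And>x. g x = card {y. y \<notin> X \<and> y < x}" unfolding g_def gapcount_def X_def by simp
  have F4: "\<And>x. finite {y. y \<notin> X \<and> y < x}"
  proof -
    fix x
    have "{y. y \<notin> X \<and> y < x} \<subseteq> {m*L..<x}" using F3 by force
    thus "finite {y. y \<notin> X \<and> y < x}" by (rule finite_subset) simp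
  qed
  have F5: "\<And>x x'. x \<le> x' \<Longrightarrow> g x \<le> g x'"
    unfolding gdef by (rule card_mono[OF F4]) auto
  have F6: "\<And>x. x \<le> m*L \<Longrightarrow> g x = 0"
  proof -
    fix x assume "x \<le> m*L"
    hence e: "{y. y \<notin> X \<and> y < x} = {}" using F3 by force
    show "g x = 0" unfolding gdef e by simp
  qed
  define R where "R j = {r. a j < r \<and> r*L + (int j - 1) < M}" for j
  have Gset: "{y. y \<notin> X \<and> y < M} = (\<Union>j\<in>{1..l}. (\<lambda>r. r*L + (int j - 1)) ` R j)"
  proof (rule set_eqI, rule iffI)
    fix y assume y: "y \<in> {y. y \<notin> X \<and> y < M}"
    define j where "j = nat (y mod L) + 1"
    have j: "1 \<le> j" "j \<le> l" "y = (y div L)*L + (int j - 1)" using jr[of y] j_def by auto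
    have "\<not> y div L \<le> a j" using y j memj[OF j(1,2), of "y div L"] by auto
    hence "y div L \<in> R j" using y j unfolding R_def by auto
    thus "y \<in> (\<Union>j\<in>{1..l}. (\<lambda>r. r*L + (int j - 1)) ` R j)" using j by force
  next
    fix y assume "y \<in> (\<Union>j\<in>{1..l}. (\<lambda>r. r*L + (int j - 1)) ` R j)"
    then obtain j r where "j \<in> {1..l}" "r \<in> R j" "y = r*L + (int j - 1)" by auto
    thus "y \<in> {y. y \<notin> X \<and> y < M}" using memj[of j r] unfolding R_def by auto
  qed
  have Rform: "\<And>j. j \<in> {1..l} \<Longrightarrow> R j = (if j < i then {a j + 1 .. a i} else if j = i then {} else {a j + 1 .. a i - 1})"
  proof -
    fix j assume j: "j \<in> {1..l}"
    show "R j = (if j < i then {a j + 1 .. a i} else if j = i then {} else {a j + 1 .. a i - 1})"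
    proof (cases "j < i")
      case True
      have key: "\<And>r. r*L + (int j - 1) < M \<longleftrightarrow> r \<le> a i"
      proof -
        fix r
        have "r*L + (int j - 1) < M \<longleftrightarrow> r*L < a i * L + (int i - int j)" unfolding M_def by linarith
        also have "\<dots> \<longleftrightarrow> r \<le> a i" using True assms(4) j by (intro lt_iff) (simp_all add: L_def)
        finally show "r*L + (int j - 1) < M \<longleftrightarrow> r \<le> a i" .
      qed
      have "R j = {a j + 1 .. a i}"
      proof (rule set_eqI)
        fix r show "r \<in> R j \<longleftrightarrow> r \<in> {a j + 1 .. a i}" unfolding R_def using key[of r] by auto
      qed
      thus ?thesis using True by simp
    next
      case False
      have key: "\<And>r. r*L + (int j - 1) < M \<longleftrightarrow> r \<le> a i - 1"
      proof -
        fix r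
        have e: "(a i - 1) * L = a i * L - L" by (simp add: algebra_simps)
        have "r*L + (int j - 1) < M \<longleftrightarrow> r*L < (a i - 1) * L + (L + int i - int j)" unfolding M_def e by linarith
        also have "\<dots> \<longleftrightarrow> r \<le> a i - 1" using False assms(3) j by (intro lt_iff) (simp_all add: L_def)
        finally show "r*L + (int j - 1) < M \<longleftrightarrow> r \<le> a i - 1" .
      qed
      have "R j = {a j + 1 .. a i - 1}"
      proof (rule set_eqI)
        fix r show "r \<in> R j \<longleftrightarrow> r \<in> {a j + 1 .. a i - 1}" unfolding R_def using key[of r] by auto
      qed
      moreover have "j = i \<Longrightarrow> {a j + 1 .. a i - 1} = {}" by simp
      ultimately show ?thesis using False by simp
    qed
  qed
  define f where "f j = (if j < i then a i - a j else if j = i then 0 else a i - a j - 1)" for j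
  have cardR: "\<And>j. j \<in> {1..l} \<Longrightarrow> int (card (R j)) = f j \<and> finite (R j)"
  proof -
    fix j assume j: "j \<in> {1..l}"
    show "int (card (R j)) = f j \<and> finite (R j)"
    proof (cases "j < i")
      case True thus ?thesis using Rform[OF j] amax[OF j] unfolding f_def by simp
    next
      case False
      show ?thesis
      proof (cases "j = i")
        case True thus ?thesis using Rform[OF j] unfolding f_def by simp
      next
        case False2: False
        hence "a j < a i" using False assms(6) j by auto
        thus ?thesis using Rform[OF j] False False2 unfolding f_def by simp
      qed
    qed
  qed
  have injR: "\<And>j. inj_on (\<lambda>r. r*L + (int j - 1)) (R j)" unfolding inj_on_def using L0 by simp
  have "card {y. y \<notin> X \<and> y < M} = (\<Sum>j\<in>{1..l}. card ((\<lambda>r. r*L + (int j - 1)) ` R j))"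
    unfolding Gset
  proof (rule card_UN_disjoint)
    show "finite {1..l}" by simp
    show "\<forall>j\<in>{1..l}. finite ((\<lambda>r. r*L + (int j - 1)) ` R j)" using cardR by blast
    show "\<forall>j\<in>{1..l}. \<forall>k\<in>{1..l}. j \<noteq> k \<longrightarrow> (\<lambda>r. r*L + (int j - 1)) ` R j \<inter> (\<lambda>r. r*L + (int k - 1)) ` R k = {}"
    proof (intro ballI impI)
      fix j k assume jk: "j \<in> {1..l}" "k \<in> {1..l}" "j \<noteq> k"
      show "(\<lambda>r. r*L + (int j - 1)) ` R j \<inter> (\<lambda>r. r*L + (int k - 1)) ` R k = {}"
      proof (rule ccontr)
        assume "\<not> ?thesis"
        then obtain r s where eq: "r*L + (int j - 1) = s*L + (int k - 1)" by auto
        have m1: "(r*L + (int j - 1)) mod L = int j - 1" using dec[of j r] jk by auto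
        have m2: "(s*L + (int k - 1)) mod L = int k - 1" using dec[of k s] jk by auto
        have "int j - 1 = int k - 1" using m1 m2 eq by metis
        thus False using jk by simp
      qed
    qed
  qed
  also have "\<dots> = (\<Sum>j\<in>{1..l}. card (R j))" using injR by (simp add: card_image)
  finally have gM0: "int (g M) = (\<Sum>j\<in>{1..l}. int (card (R j)))" unfolding gdef by simp
  also have "\<dots> = (\<Sum>j\<in>{1..l}. f j)" using cardR by (intro sum.cong) auto
  also have "\<dots> = sum f {1..i-1} + f i + sum f {i+1..l}" using split3[OF assms(3,4)] .
  also have "\<dots> = (\<Sum>j = 1..i-1. a i - a j) + (\<Sum>j = i+1..l. a i - a j - 1)"
  proof -
    have "sum f {1..i-1} = (\<Sum>j = 1..i-1. a i - a j)" by (rule sum.cong) (auto simp: f_def)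
    moreover have "sum f {i+1..l} = (\<Sum>j = i+1..l. a i - a j - 1)" by (rule sum.cong) (auto simp: f_def)
    moreover have "f i = 0" by (simp add: f_def)
    ultimately show ?thesis by simp
  qed
  finally have gM: "int (g M) = (\<Sum>j = 1..i-1. a i - a j) + (\<Sum>j = i+1..l. a i - a j - 1)" .
  have gM2: "(\<Sum>j = 1..i-1. a i - a j) + (\<Sum>j = i+1..l. a i - a j - 1) = (a i - 1) * int l + int i"
  proof -
    have s1: "(\<Sum>j = 1..l. a i - a j) = int l * a i"
      using assms(2) by (simp add: sum_subtractf)
    have s2: "(\<Sum>j = i+1..l. a i - a j - 1) = (\<Sum>j = i+1..l. a i - a j) - (int l - int i)"
      using assms(4) by (simp add: sum_subtractf)
    show ?thesis using split3[OF assms(3,4), of "\<lambda>j. a i - a j"] s1 s2 by (simp add: algebra_simps)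
  qed
  define S where "S = {x \<in> X. 0 < g x}"
  have Sfin: "finite S"
  proof -
    have "S \<subseteq> {m*L..M}"
    proof
      fix x assume "x \<in> S"
      hence "x \<in> X" "0 < g x" unfolding S_def by auto
      moreover have "m*L \<le> x" proof (rule ccontr) assume "\<not> m*L \<le> x" thus False using F6[of x] \<open>0 < g x\<close> by simp qed
      ultimately show "x \<in> {m*L..M}" using F1 by simp
    qed
    thus ?thesis by (rule finite_subset) simp
  qed
  have fp: "first_part (pi_ell l a) = g M"
  proof (cases "S = {}")
    case True
    hence "g M = 0" using F2 unfolding S_def by auto
    moreover have e: "{x \<in> Xset l a. 0 < gapcount l a x} = {}" using True unfolding S_def g_def X_def by simp
    moreover have "pi_ell l a = []" unfolding pi_ell_def e by simp
    ultimately show ?thesis unfolding first_part_def by simp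
  next
    case False
    then obtain x where x: "x \<in> S" by auto
    hence "0 < g M" using F5[OF F1] unfolding S_def by force
    hence MS: "M \<in> S" using F2 unfolding S_def by simp
    define xs where "xs = map g (sorted_list_of_set S)"
    have pe: "pi_ell l a = rev (sort xs)" unfolding pi_ell_def xs_def S_def g_def X_def by simp
    have ne: "xs \<noteq> []" using False Sfin unfolding xs_def by simp
    then obtain q qs where qq: "rev (sort xs) = q # qs"
      by (metis length_0_conv length_rev length_sort list.exhaust)
    have "first_part (pi_ell l a) = hd (rev (sort xs))" unfolding pe first_part_def qq by simp
    also have "\<dots> = Max (set xs)" using last_sort[OF ne] .
    also have "\<dots> = Max (g ` S)" unfolding xs_def using Sfin by simp
    also have "\<dots> = g M"
      using MS Sfin F5[OF F1] unfolding S_def by (intro Max_eqI) auto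
    finally show ?thesis .
  qed
  show ?thesis using fp gM gM2 by simp
qed

end
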